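(* Let $\mathcal{N}=\{1,\dots,N\}$ be a finite index set of blocks, let $\sigma>0$, and let $\mu_1,\dots,\mu_N\in\mathbb{R}$. For a fixed user $i$, let $p_{i,1},\dots,p_{i,N}>0$ be prior probabilities with $\sum_{n\in\mathcal{N}}p_{i,n}=1$. For $n\in\mathcal{N}$ let $\mathbb{P}(s\mid n)=\frac{1}{\sqrt{2\pi\sigma^2}}e^{-(s-\mu_n)^2/(2\sigma^2)}$ be the Gaussian density with mean $\mu_n$ and standard deviation $\sigma$. For $n'\in\mathcal{N}$ define the decision region $$\mathcal{R}_{i,n'}=\Big\{s\in\mathbb{R} : (s-\mu_{n'})^2-(s-\mu_n)^2\le 2\sigma^2\ln\frac{p_{i,n'}}{p_{i,n}}\ \text{ for all } n\in\mathcal{N}\setminus\{n'\}\Big\}.$$ Let $n,n'\in\mathcal{N}$ with $n\neq n'$ and $\mu_n\neq\mu_{n'}$, and set $$d_{i,n,n'}=\frac{(\mu_{n'}-\mu_n)^2-2\sigma^2\ln(p_{i,n'}/p_{i,n})}{2\sigma|\mu_{n'}-\mu_n|}.$$ Then $$\int_{\mathcal{R}_{i,n'}}\mathbb{P}(s\mid n)\,ds\le\begin{cases}\frac{1}{2}e^{-d_{i,n,n'}^2/2}, & d_{i,n,n'}\ge 0,\\[4pt] 1-\frac{1}{4}e^{-2d_{i,n,n'}^2/\pi}, & d_{i,n,n'}<0.\end{cases}$$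
   Context: This arises in received-signal-strength (RSS) based positioning: the space is divided into blocks $n$, the RSS measured by a user located in block $n$ is Gaussian with mean $\mu_n$ and standard deviation $\sigma$, $p_{i,n}$ is the prior probability that user $i$ is in block $n$, and $\mathcal{R}_{i,n'}$ is the set of RSS values for which the (prior-weighted maximum likelihood) estimate of user $i$'s location is block $n'$. The integral is thus the probability that a user in block $n$ is wrongly located in block $n'$. *)

theory Defs
  imports "HOL-Probability.Probability"
begin

definition decision_region ::
  "nat \<Rightarrow> real \<Rightarrow> (nat \<Rightarrow> real) \<Rightarrow> (nat \<Rightarrow> real) \<Rightarrow> nat \<Rightarrow> real set" where
  "decision_region N \<sigma> \<mu> p n' =
     {s. \<forall>n\<in>{1..N} - {n'}. (s - \<mu> n')\<^sup>2 - (s - \<mu> n)\<^sup>2 \<le> 2 * \<sigma>\<^sup>2 * ln (p n' / p n)}"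

definition dist_param ::
  "real \<Rightarrow> (nat \<Rightarrow> real) \<Rightarrow> (nat \<Rightarrow> real) \<Rightarrow> nat \<Rightarrow> nat \<Rightarrow> real" where
  "dist_param \<sigma> \<mu> p n n' =
     ((\<mu> n' - \<mu> n)\<^sup>2 - 2 * \<sigma>\<^sup>2 * ln (p n' / p n)) / (2 * \<sigma> * \<bar>\<mu> n' - \<mu> n\<bar>)"

end

theory Submission
  imports Defs
begin

lemma gauss_half:
  "has_bochner_integral lborel (\<lambda>u. indicator {0..} u * std_normal_density u) (1/2)"
proof -
  have c: "(1 / sqrt 2::real) \<noteq> 0" by simp
  have h1: "has_bochner_integral lborel (\<lambda>x. indicator {0..} (0 + (1/sqrt 2) * x) *\<^sub>R exp (- (0 + (1/sqrt 2) * x)\<^sup>2))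
          ((sqrt pi / 2) /\<^sub>R \<bar>1/sqrt 2\<bar>)"
    using iffD1[OF lborel_has_bochner_integral_real_affine_iff[OF c, where f="\<lambda>x. indicator {0..} x *\<^sub>R exp (- x\<^sup>2)" and x="sqrt pi / 2" and t=0] gaussian_moment_0]
    by simp
  have h2: "has_bochner_integral lborel (\<lambda>x. (1 / sqrt (2*pi)) * (indicator {0..} (0 + (1/sqrt 2) * x) *\<^sub>R exp (- (0 + (1/sqrt 2) * x)\<^sup>2)))
          ((1 / sqrt (2*pi)) * ((sqrt pi / 2) /\<^sub>R \<bar>1/sqrt 2\<bar>))"
    by (rule has_bochner_integral_mult_right[OF h1])
  have v: "(1 / sqrt (2*pi)) * ((sqrt pi / 2) /\<^sub>R \<bar>1/sqrt 2\<bar>) = 1/2"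
    by (simp add: real_sqrt_mult field_simps)
  have ind: "indicator {0..} (0 + (1/sqrt 2) * x) = (indicator {0..} x :: real)" for x :: real
    by (simp add: indicator_def zero_le_divide_iff)
  have ex: "exp (- (0 + (1/sqrt 2) * x)\<^sup>2) = exp (- x\<^sup>2 / 2)" for x :: real
    by (simp add: power_mult_distrib power_divide)
  have f: "(\<lambda>x. (1 / sqrt (2*pi)) * (indicator {0..} (0 + (1/sqrt 2) * x) *\<^sub>R exp (- (0 + (1/sqrt 2) * x)\<^sup>2)))
     = (\<lambda>u. indicator {0..} u * std_normal_density u)"
    unfolding ind ex std_normal_density_def by (simp add: fun_eq_iff)
  show ?thesis using h2 unfolding v f .
qed

lemma pointwise_lower:
  fixes t :: real assumes "0 \<le> t"
  shows "t / pi * exp (- 2 * t\<^sup>2 / pi) \<le> std_normal_density t"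
proof -
  define c where "c = 2/pi - 1/2"
  have e: "exp (1::real) \<ge> 5/2"
    using exp_lower_Taylor_quadratic[of 1] by simp
  have pi: "pi \<le> 16/5" using pi_approx by simp
  have cpos: "c > 0" unfolding c_def using pi_less_4 by (simp add: field_simps)
  have key: "exp 1 * (2*c) \<ge> 2/pi"
  proof -
    have "exp 1 * (2*c) * pi = exp 1 * (4 - pi)" unfolding c_def by (simp add: field_simps)
    also have "\<dots> \<ge> 5/2 * (4/5)" using e pi by (intro mult_mono) auto
    finally show ?thesis by (simp add: field_simps)
  qed
  have y: "exp y \<ge> exp 1 * y" for y :: real
  proof -
    have "exp (y - 1) \<ge> y" using exp_ge_add_one_self[of "y-1"] by simp
    then show ?thesis by (simp add: exp_diff field_simps)
  qed
  have "(exp (c * t\<^sup>2))\<^sup>2 = exp (c*t\<^sup>2) * exp (c*t\<^sup>2)" by (rule power2_eq_square)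
  also have "\<dots> = exp (c*t\<^sup>2 + c*t\<^sup>2)" by (rule exp_add[symmetric])
  also have "\<dots> = exp (2*c*t\<^sup>2)" by (simp add: algebra_simps)
  also have "\<dots> \<ge> exp 1 * (2*c*t\<^sup>2)" using y by simp
  also have "exp 1 * (2*c*t\<^sup>2) \<ge> 2/pi * t\<^sup>2" using key
    by (metis mult.assoc mult_right_mono zero_le_power2)
  finally have "(t * sqrt (2/pi))\<^sup>2 \<le> (exp (c * t\<^sup>2))\<^sup>2"
    by (simp add: power_mult_distrib mult_ac)
  then have A: "t * sqrt (2/pi) \<le> exp (c * t\<^sup>2)"
    by (rule power2_le_imp_le) simp
  have "t / pi * exp (- 2 * t\<^sup>2 / pi) = (t * sqrt (2/pi)) * (1/sqrt (2*pi)) * exp (- 2 * t\<^sup>2 / pi)"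
    by (simp add: real_sqrt_divide real_sqrt_mult field_simps)
  also have "\<dots> \<le> exp (c * t\<^sup>2) * (1/sqrt (2*pi)) * exp (- 2 * t\<^sup>2 / pi)"
    using A by (intro mult_right_mono) auto
  also have "\<dots> = (1/sqrt (2*pi)) * (exp (c * t\<^sup>2) * exp (- 2 * t\<^sup>2 / pi))"
    by (simp only: mult_ac)
  also have "exp (c * t\<^sup>2) * exp (- 2 * t\<^sup>2 / pi) = exp (- t\<^sup>2 / 2)"
  proof -
    have "c * t\<^sup>2 + - 2 * t\<^sup>2 / pi = - t\<^sup>2 / 2" unfolding c_def by (simp add: field_simps)
    then show ?thesis by (metis exp_add)
  qed
  also have "(1/sqrt (2*pi)) * exp (- t\<^sup>2 / 2) = std_normal_density t"
    by (simp only: std_normal_density_def)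
  finally show ?thesis .
qed

lemma integrable_tail: "integrable lborel (\<lambda>t. indicator A t * std_normal_density t)"
  if "A \<in> sets borel"
  using integrable_mult_indicator[of A lborel std_normal_density] that by simp

lemma upper_tail:
  fixes d :: real assumes d: "0 \<le> d"
  shows "integral\<^sup>L lborel (\<lambda>t. indicator {d..} t * std_normal_density t) \<le> 1/2 * exp (- d\<^sup>2 / 2)"
proof -
  have c: "(1::real) \<noteq> 0" by simp
  have "has_bochner_integral lborel (\<lambda>x. indicator {d..} (d + 1 * x) * std_normal_density (d + 1 * x - d)) (1/2)"
    using gauss_half by (simp add: indicator_def)
  then have h: "has_bochner_integral lborel (\<lambda>t. indicator {d..} t * std_normal_density (t - d)) (1/2)"
    using lborel_has_bochner_integral_real_affine_iff[OF c, of "\<lambda>t. indicator {d..} t * std_normal_density (t - d)" "1/2" d]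
    by simp
  have "integral\<^sup>L lborel (\<lambda>t. indicator {d..} t * std_normal_density t)
      \<le> integral\<^sup>L lborel (\<lambda>t. exp (- d\<^sup>2 / 2) * (indicator {d..} t * std_normal_density (t - d)))"
  proof (rule integral_mono)
    show "integrable lborel (\<lambda>t. indicator {d..} t * std_normal_density t)"
      by (rule integrable_tail) simp
    show "integrable lborel (\<lambda>t. exp (- d\<^sup>2 / 2) * (indicator {d..} t * std_normal_density (t - d)))"
      using h by (intro integrable_mult_right) (simp add: has_bochner_integral_iff)
    fix t :: real
    show "indicator {d..} t * std_normal_density t \<le> exp (- d\<^sup>2 / 2) * (indicator {d..} t * std_normal_density (t - d))"
    proof (cases "d \<le> t")
      case True
      have "- t\<^sup>2 / 2 \<le> - d\<^sup>2 / 2 + - (t - d)\<^sup>2 / 2"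
      proof -
        have "0 \<le> 2 * d * (t - d)" using True d by simp
        then show ?thesis by (simp add: power2_eq_square algebra_simps)
      qed
      then have "exp (- t\<^sup>2 / 2) \<le> exp (- d\<^sup>2 / 2) * exp (- (t - d)\<^sup>2 / 2)"
        by (simp add: exp_add[symmetric])
      then show ?thesis using True
        by (simp add: std_normal_density_def indicator_def field_simps)
    qed simp
  qed
  also have "\<dots> = exp (- d\<^sup>2 / 2) * (1/2)"
    using h by (simp add: has_bochner_integral_iff)
  finally show ?thesis by simp
qed

lemma lower_tail:
  fixes x :: real assumes x: "0 \<le> x"
  shows "1/4 * exp (- 2 * x\<^sup>2 / pi) \<le> integral\<^sup>L lborel (\<lambda>t. indicator {x<..} t * std_normal_density t)"
proof -
  define f where "f = (\<lambda>t::real. t / pi * exp (- 2 * t\<^sup>2 / pi))"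
  define F where "F = (\<lambda>t::real. - 1/4 * exp (- 2 * t\<^sup>2 / pi))"
  have lim: "(F \<longlongrightarrow> 0) at_top"
  proof -
    have "((\<lambda>t::real. - 1/4 * exp (- 2 * t\<^sup>2 / pi)) \<longlongrightarrow> 0) at_top"
    proof -
      have sq: "filterlim (\<lambda>t::real. t\<^sup>2) at_top at_top"
        by (intro filterlim_pow_at_top filterlim_ident) simp
      have "filterlim (\<lambda>t::real. (2/pi) * t\<^sup>2) at_top at_top"
        using filterlim_tendsto_pos_mult_at_top[OF tendsto_const[of "2/pi"] _ sq] by simp
      then have "filterlim (\<lambda>t::real. - ((2/pi) * t\<^sup>2)) at_bot at_top"
        by (simp add: filterlim_uminus_at_bot)
      then have "((\<lambda>t::real. exp (- ((2/pi) * t\<^sup>2))) \<longlongrightarrow> 0) at_top"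
        by (rule filterlim_compose[OF exp_at_bot])
      then have "((\<lambda>t::real. - 1/4 * exp (- ((2/pi) * t\<^sup>2))) \<longlongrightarrow> 0) at_top"
        by (rule tendsto_mult_right_zero)
      moreover have "(\<lambda>t::real. - 1/4 * exp (- ((2/pi) * t\<^sup>2))) = (\<lambda>t::real. - 1/4 * exp (- 2 * t\<^sup>2 / pi))"
        by auto
      ultimately show ?thesis by simp
    qed
    then show ?thesis by (simp add: F_def)
  qed
  have "(\<integral>\<^sup>+t. ennreal (f t) * indicator {x..} t \<partial>lborel) = 0 - F x"
  proof (rule nn_integral_FTC_atLeast[OF _ _ _ lim])
    show "f \<in> borel_measurable borel" unfolding f_def by measurable
    show "DERIV F t :> f t" for t
      unfolding F_def f_def by (auto intro!: derivative_eq_intros simp: field_simps power2_eq_square)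
    show "0 \<le> f t" if "x \<le> t" for t using that x unfolding f_def by simp
  qed
  moreover have "(\<integral>\<^sup>+t. ennreal (f t * indicator {x..} t) \<partial>lborel) = (\<integral>\<^sup>+t. ennreal (f t) * indicator {x..} t \<partial>lborel)"
    by (intro nn_integral_cong) (auto split: split_indicator)
  ultimately have nn: "(\<integral>\<^sup>+t. ennreal (f t * indicator {x..} t) \<partial>lborel) = ennreal (1/4 * exp (- 2 * x\<^sup>2 / pi))"
    by (simp add: F_def)
  have hb: "has_bochner_integral lborel (\<lambda>t. f t * indicator {x..} t) (1/4 * exp (- 2 * x\<^sup>2 / pi))"
    by (rule has_bochner_integral_nn_integral[OF _ _ _ nn]) (use x in \<open>auto simp: f_def split: split_indicator\<close>)
  have "integral\<^sup>L lborel (\<lambda>t. f t * indicator {x..} t) = integral\<^sup>L lborel (\<lambda>t. f t * indicator {x<..} t)"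
    by (rule integral_cong_AE) (auto simp: f_def intro!: eventually_mono[OF AE_lborel_singleton[of x]] split: split_indicator)
  also have "\<dots> \<le> integral\<^sup>L lborel (\<lambda>t. indicator {x<..} t * std_normal_density t)"
  proof (rule integral_mono)
    show "integrable lborel (\<lambda>t. f t * indicator {x<..} t)"
      using hb
      by (subst integrable_cong_AE[where g="\<lambda>t. f t * indicator {x..} t"])
         (auto simp: f_def has_bochner_integral_iff intro!: eventually_mono[OF AE_lborel_singleton[of x]] split: split_indicator)
    show "integrable lborel (\<lambda>t. indicator {x<..} t * std_normal_density t)"
      by (rule integrable_tail) simp
    fix t :: real
    show "f t * indicator {x<..} t \<le> indicator {x<..} t * std_normal_density t"
      using pointwise_lower[of t] x unfolding f_def by (auto split: split_indicator)
  qed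
  finally show ?thesis using hb by (simp add: has_bochner_integral_iff)
qed


lemma tail_complement:
  fixes d :: real assumes "d < 0"
  shows "integral\<^sup>L lborel (\<lambda>t. indicator {d..} t * std_normal_density t) \<le> 1 - 1/4 * exp (- 2 * d\<^sup>2 / pi)"
proof -
  have i1: "integrable lborel (\<lambda>t. indicator {..<d} t * std_normal_density t)"
    by (rule integrable_tail) simp
  have "integral\<^sup>L lborel (\<lambda>t. indicator {d..} t * std_normal_density t)
      = integral\<^sup>L lborel (\<lambda>t. std_normal_density t - indicator {..<d} t * std_normal_density t)"
    by (intro arg_cong[where f="integral\<^sup>L lborel"] ext) (auto split: split_indicator)
  also have "\<dots> = 1 - integral\<^sup>L lborel (\<lambda>t. indicator {..<d} t * std_normal_density t)"
    using i1 by (simp add: Bochner_Integration.integral_diff[OF integrable_normal_density i1])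
  also have "integral\<^sup>L lborel (\<lambda>t. indicator {..<d} t * std_normal_density t)
      = integral\<^sup>L lborel (\<lambda>u. indicator {-d<..} u * std_normal_density u)"
  proof -
    have m1: "(-1::real) \<noteq> 0" by simp
    have "integral\<^sup>L lborel (\<lambda>t. indicator {..<d} t * std_normal_density t)
        = \<bar>-1\<bar> *\<^sub>R integral\<^sup>L lborel (\<lambda>u. indicator {..<d} (0 + -1 * u) * std_normal_density (0 + -1 * u))"
      by (rule lborel_integral_real_affine[OF m1])
    also have "\<dots> = integral\<^sup>L lborel (\<lambda>u. indicator {..<d} (0 + -1 * u) * std_normal_density (0 + -1 * u))"
      by simp
    also have "\<dots> = integral\<^sup>L lborel (\<lambda>u. indicator {-d<..} u * std_normal_density u)"
      by (intro arg_cong[where f="integral\<^sup>L lborel"] ext) (auto simp: std_normal_density_def split: split_indicator)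
    finally show ?thesis .
  qed
  finally show ?thesis using lower_tail[of "-d"] assms by simp
qed

theorem proposition1:
  fixes N :: nat and \<sigma> :: real and \<mu> p :: "nat \<Rightarrow> real" and n n' :: nat
  assumes "\<sigma> > 0"
    and "\<And>k. k \<in> {1..N} \<Longrightarrow> p k > 0"
    and "(\<Sum>k\<in>{1..N}. p k) = 1"
    and "n \<in> {1..N}" and "n' \<in> {1..N}" and "n \<noteq> n'" and "\<mu> n \<noteq> \<mu> n'"
  shows "(LINT s:decision_region N \<sigma> \<mu> p n'|lborel. normal_density (\<mu> n) \<sigma> s)
         \<le> (if dist_param \<sigma> \<mu> p n n' \<ge> 0
             then 1/2 * exp (- (dist_param \<sigma> \<mu> p n n')\<^sup>2 / 2)
             else 1 - 1/4 * exp (- 2 * (dist_param \<sigma> \<mu> p n n')\<^sup>2 / pi))"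
proof -
  note sp = assms(1)
  define a where "a = \<mu> n"
  define b where "b = \<mu> n'"
  define L where "L = ln (p n' / p n)"
  define d where "d = dist_param \<sigma> \<mu> p n n'"
  define R where "R = decision_region N \<sigma> \<mu> p n'"
  define H where "H = {s. (s - b)\<^sup>2 - (s - a)\<^sup>2 \<le> 2 * \<sigma>\<^sup>2 * L}"
  have ab: "a \<noteq> b" using assms(7) by (simp add: a_def b_def)
  have d_eq: "d = ((b - a)\<^sup>2 - 2 * \<sigma>\<^sup>2 * L) / (2 * \<sigma> * \<bar>b - a\<bar>)"
    by (simp add: d_def dist_param_def a_def b_def L_def)
  have RH: "R \<subseteq> H"
    using assms(4,6) by (auto simp: R_def H_def decision_region_def a_def b_def L_def)
  have Hb: "H \<in> sets borel" unfolding H_def by measurable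
  define Na where "Na = normal_density a \<sigma>"
  have step1: "(LINT s:R|lborel. Na s) \<le> integral\<^sup>L lborel (\<lambda>s. indicator H s * Na s)"
  proof (cases "integrable lborel (\<lambda>s. indicator R s *\<^sub>R Na s)")
    case True
    show ?thesis unfolding set_lebesgue_integral_def
    proof (rule integral_mono[OF True])
      show "integrable lborel (\<lambda>s. indicator H s * Na s)"
        using integrable_mult_indicator[of H lborel "normal_density a \<sigma>", OF _ integrable_normal_density] Hb sp
        by (simp add: Na_def)
      fix s show "indicator R s *\<^sub>R Na s \<le> indicator H s * Na s"
        using RH by (auto simp: Na_def split: split_indicator)
    qed
  next
    case False
    then show ?thesis unfolding set_lebesgue_integral_def
      by (simp add: not_integrable_integral_eq Na_def)
  qed
  define c where "c = \<sigma> * sgn (b - a)"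
  have c0: "c \<noteq> 0" using sp ab by (simp add: c_def sgn_if)
  have cabs: "\<bar>c\<bar> = \<sigma>" using sp ab by (simp add: c_def abs_mult)
  have csq: "c\<^sup>2 = \<sigma>\<^sup>2" using cabs by (metis power2_abs)
  have cd: "c * (b - a) = \<sigma> * \<bar>b - a\<bar>" using ab by (cases "a < b") (auto simp: c_def algebra_simps)
  have memH: "a + c * x \<in> H \<longleftrightarrow> d \<le> x" for x
  proof -
    have "(a + c * x - b)\<^sup>2 - (a + c * x - a)\<^sup>2 = (b - a)\<^sup>2 - 2 * x * (c * (b - a))"
      by (simp add: power2_eq_square algebra_simps)
    also have "\<dots> = (b - a)\<^sup>2 - 2 * \<sigma> * \<bar>b - a\<bar> * x" by (simp add: cd)
    finally have e: "(a + c * x - b)\<^sup>2 - (a + c * x - a)\<^sup>2 = (b - a)\<^sup>2 - 2 * \<sigma> * \<bar>b - a\<bar> * x" .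
    have pos: "0 < 2 * \<sigma> * \<bar>b - a\<bar>" using sp ab by simp
    have "d \<le> x \<longleftrightarrow> (b - a)\<^sup>2 - 2 * \<sigma>\<^sup>2 * L \<le> x * (2 * \<sigma> * \<bar>b - a\<bar>)"
      unfolding d_eq by (rule pos_divide_le_eq[OF pos])
    moreover have "x * (2 * \<sigma> * \<bar>b - a\<bar>) = 2 * \<sigma> * \<bar>b - a\<bar> * x" by (rule mult.commute)
    ultimately show ?thesis unfolding H_def mem_Collect_eq e by linarith
  qed
  have Nval: "Na (a + c * x) = std_normal_density x / \<sigma>" for x
  proof -
    have h1: "- (a + c * x - a)\<^sup>2 / (2 * \<sigma>\<^sup>2) = - x\<^sup>2 / 2"
      using sp by (simp add: power_mult_distrib csq)
    have h2: "sqrt (2 * pi * \<sigma>\<^sup>2) = sqrt (2 * pi) * \<sigma>"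
      using sp by (simp add: real_sqrt_mult)
    show ?thesis
      unfolding Na_def normal_density_def std_normal_density_def h1 h2 by simp
  qed
  have step2: "integral\<^sup>L lborel (\<lambda>s. indicator H s * Na s) = integral\<^sup>L lborel (\<lambda>t. indicator {d..} t * std_normal_density t)"
  proof -
    have "integral\<^sup>L lborel (\<lambda>s. indicator H s * Na s)
        = \<bar>c\<bar> *\<^sub>R integral\<^sup>L lborel (\<lambda>x. indicator H (a + c * x) * Na (a + c * x))"
      by (rule lborel_integral_real_affine[OF c0])
    also have "\<dots> = \<sigma> * integral\<^sup>L lborel (\<lambda>x. (1/\<sigma>) * (indicator {d..} x * std_normal_density x))"
      using memH Nval cabs by (simp add: indicator_def)
    also have "\<dots> = integral\<^sup>L lborel (\<lambda>t. indicator {d..} t * std_normal_density t)"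
      using sp by simp
    finally show ?thesis .
  qed
  have main: "(LINT s:R|lborel. Na s) \<le> integral\<^sup>L lborel (\<lambda>t. indicator {d..} t * std_normal_density t)"
    using step1 step2 by simp
  then have main': "(LINT s:decision_region N \<sigma> \<mu> p n'|lborel. normal_density (\<mu> n) \<sigma> s)
      \<le> integral\<^sup>L lborel (\<lambda>t. indicator {dist_param \<sigma> \<mu> p n n'..} t * std_normal_density t)"
    unfolding R_def Na_def a_def d_def .
  show ?thesis
  proof (cases "0 \<le> dist_param \<sigma> \<mu> p n n'")
    case True
    then show ?thesis using order_trans[OF main' upper_tail[OF True]] by simp
  next
    case False
    then have "dist_param \<sigma> \<mu> p n n' < 0" by simp
    then show ?thesis using False order_trans[OF main' tail_complement] by simp
  qed
qed

end
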